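(* Let $G$ and $H$ be locally compact abelian groups with $H$ torsion-free, and let $f:G\to H$ be a continuous homomorphism. Then $f(G_{op})\subseteq H_{op}$.
   Context: A subgroup $H$ of an abelian group $G$ is pure if $nH=H\cap nG$ for every positive integer $n$. For an LCA group $G$, $G_{op}$ denotes the intersection of all open pure subgroups of $G$. *)

theory Defs
  imports "HOL-Analysis.Analysis"
begin

fun nmul :: "nat \<Rightarrow> 'a::monoid_add \<Rightarrow> 'a" where
  "nmul 0 x = 0"
| "nmul (Suc n) x = x + nmul n x"

definition is_add_subgroup :: "'a::group_add set \<Rightarrow> bool" where
  "is_add_subgroup H \<longleftrightarrow> 0 \<in> H \<and> (\<forall>x\<in>H. \<forall>y\<in>H. x + y \<in> H) \<and> (\<forall>x\<in>H. - x \<in> H)"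

definition pure_subgroup :: "'a::ab_group_add set \<Rightarrow> bool" where
  "pure_subgroup H \<longleftrightarrow> is_add_subgroup H \<and>
     (\<forall>n>0. nmul n ` H = H \<inter> nmul n ` (UNIV :: 'a set))"

definition G_op :: "'a::{ab_group_add, topological_space} set" where
  "G_op = \<Inter> {H. open H \<and> pure_subgroup H}"

definition torsion_free :: "'a::ab_group_add itself \<Rightarrow> bool" where
  "torsion_free _ \<longleftrightarrow> (\<forall>(x::'a) n. n > 0 \<and> nmul n x = 0 \<longrightarrow> x = 0)"

definition LCA :: "'a::{topological_ab_group_add, t2_space} itself \<Rightarrow> bool" where
  "LCA _ \<longleftrightarrow> locally_compact_space (euclidean :: 'a topology)"

end

theory Submission
  imports Defs
begin

lemma nmul_diff: "nmul n ((a::'a::ab_group_add) - b) = nmul n a - nmul n b"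
  by (induction n) (auto simp: algebra_simps)

lemma nmul_hom:
  fixes f :: "'a::ab_group_add \<Rightarrow> 'b::ab_group_add"
  assumes "\<And>x y. f (x + y) = f x + f y"
  shows "f (nmul n x) = nmul n (f x)"
proof -
  have f0: "f 0 = 0" using assms[of 0 0] by simp
  show ?thesis by (induction n) (auto simp: assms f0)
qed

lemma nmul_closed: "is_add_subgroup H \<Longrightarrow> x \<in> H \<Longrightarrow> nmul n x \<in> H"
  by (induction n) (auto simp: is_add_subgroup_def)

theorem lemma8:
  fixes f :: "'a::{topological_ab_group_add, t2_space} \<Rightarrow> 'b::{topological_ab_group_add, t2_space}"
  assumes "LCA TYPE('a)"
    and "LCA TYPE('b)"
    and "torsion_free TYPE('b)"
    and "continuous_on UNIV f"
    and "\<And>x y. f (x + y) = f x + f y"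
  shows "f ` (G_op :: 'a set) \<subseteq> (G_op :: 'b set)"
proof -
  have f0: "f 0 = 0" using assms(5)[of 0 0] by simp
  have fneg: "f (- x) = - f x" for x using assms(5)[of x "-x"] f0
    by (simp add: eq_neg_iff_add_eq_0 add.commute)
  have "f x \<in> K" if x: "x \<in> G_op" and K: "open K" "pure_subgroup K" for x K
  proof -
    let ?P = "f -` K"
    have sg: "is_add_subgroup K" using K(2) by (simp add: pure_subgroup_def)
    have op: "open ?P" using continuous_on_open_vimage[of UNIV f] assms(4) K(1) by auto
    have sgP: "is_add_subgroup ?P" using sg f0 fneg assms(5)
      by (auto simp: is_add_subgroup_def)
    have "nmul n ` ?P = ?P \<inter> nmul n ` UNIV" if n: "n > 0" for n
    proof
      show "nmul n ` ?P \<subseteq> ?P \<inter> nmul n ` UNIV"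
        using nmul_closed[OF sgP] by auto
    next
      show "?P \<inter> nmul n ` UNIV \<subseteq> nmul n ` ?P"
      proof
        fix z assume "z \<in> ?P \<inter> nmul n ` UNIV"
        then obtain y where z: "z = nmul n y" and fz: "f z \<in> K" by auto
        have "f z \<in> K \<inter> nmul n ` UNIV" using fz z nmul_hom[OF assms(5)] by auto
        with K(2) n obtain k where k: "k \<in> K" "f z = nmul n k"
          unfolding pure_subgroup_def by blast
        have "nmul n (f y - k) = 0"
          using k z nmul_hom[OF assms(5)] by (simp add: nmul_diff)
        hence "f y = k" using assms(3) n unfolding torsion_free_def by auto
        thus "z \<in> nmul n ` ?P" using z k by auto
      qed
    qed
    hence "pure_subgroup ?P" using sgP by (simp add: pure_subgroup_def)
    hence "x \<in> ?P" using x op unfolding G_op_def by blast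
    thus ?thesis by simp
  qed
  thus ?thesis unfolding G_op_def by blast
qed

end
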